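(* Let $\mathcal F_2$ be the set of the following five graphs: the path $P_4$; $K_5\setminus S_2$ (the complete graph on 5 vertices with the two edges of a path $uvw$ removed); $K_6\setminus M_2$ (the complete graph on 6 vertices with two disjoint edges removed); the graph on vertices $1,\dots,5$ with edges $23,24,34,14,45$ (a triangle with two pendant vertices attached to the same triangle vertex); and the graph on vertices $1,\dots,5$ with edges $12,14,23,24,34,45$ (the diamond $K_4$ minus edge $13$ with a pendant vertex attached to the degree-3 vertex $4$). A simple connected graph $G$ is $\mathcal F_2$-free (no induced subgraph of $G$ is isomorphic to a member of $\mathcal F_2$) if and only if $G$ is an induced subgraph of $K_{m,n,o}$ or of $T_n\vee(K_m+K_o)$ for some non-negative integers $m,n,o$.
   Context: $K_{m,n,o}$ is the complete tripartite graph with parts of sizes $m,n,o$; $T_n$ is the edgeless graph on $n$ vertices; $K_m$ the complete graph on $m$ vertices; $G+H$ is the disjoint union and $G\vee H$ the join (disjoint union plus all edges between $G$ and $H$). *)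

theory Defs
  imports Main
begin

type_synonym 'a graph = "'a set \<times> ('a \<Rightarrow> 'a \<Rightarrow> bool)"

definition verts :: "'a graph \<Rightarrow> 'a set" where "verts G = fst G"
definition adj :: "'a graph \<Rightarrow> 'a \<Rightarrow> 'a \<Rightarrow> bool" where "adj G = snd G"

definition sgraph :: "'a graph \<Rightarrow> bool" where
  "sgraph G \<longleftrightarrow> finite (verts G)
     \<and> (\<forall>x y. adj G x y \<longrightarrow> x \<in> verts G \<and> y \<in> verts G)
     \<and> (\<forall>x y. adj G x y \<longrightarrow> adj G y x)
     \<and> (\<forall>x. \<not> adj G x x)"

definition connected_graph :: "'a graph \<Rightarrow> bool" where
  "connected_graph G \<longleftrightarrow> (\<forall>x\<in>verts G. \<forall>y\<in>verts G. (adj G)\<^sup>*\<^sup>* x y)"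

definition induced_sub :: "'b graph \<Rightarrow> 'a graph \<Rightarrow> bool" where
  "induced_sub H G \<longleftrightarrow> (\<exists>f. inj_on f (verts H) \<and> f ` verts H \<subseteq> verts G
      \<and> (\<forall>x\<in>verts H. \<forall>y\<in>verts H. adj G (f x) (f y) \<longleftrightarrow> adj H x y))"

definition edge_graph :: "nat set \<Rightarrow> (nat \<times> nat) list \<Rightarrow> nat graph" where
  "edge_graph V es = (V, \<lambda>x y. (x, y) \<in> set es \<or> (y, x) \<in> set es)"

definition P4 :: "nat graph" where
  "P4 = edge_graph {1..4} [(1,2),(2,3),(3,4)]"

text \<open>K5 minus the two edges 12, 23 of a path 1-2-3.\<close>
definition K5_minus_S2 :: "nat graph" where
  "K5_minus_S2 = edge_graph {1..5} [(1,3),(1,4),(1,5),(2,4),(2,5),(3,4),(3,5),(4,5)]"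

text \<open>K6 minus the two disjoint edges 12, 34.\<close>
definition K6_minus_M2 :: "nat graph" where
  "K6_minus_M2 = edge_graph {1..6}
     [(1,3),(1,4),(1,5),(1,6),(2,3),(2,4),(2,5),(2,6),(3,5),(3,6),(4,5),(4,6),(5,6)]"

definition F2_4 :: "nat graph" where
  "F2_4 = edge_graph {1..5} [(2,3),(2,4),(3,4),(1,4),(4,5)]"

definition F2_5 :: "nat graph" where
  "F2_5 = edge_graph {1..5} [(1,2),(1,4),(2,3),(2,4),(3,4),(4,5)]"

definition F2 :: "nat graph set" where
  "F2 = {P4, K5_minus_S2, K6_minus_M2, F2_4, F2_5}"

definition F2_free :: "'a graph \<Rightarrow> bool" where
  "F2_free G \<longleftrightarrow> (\<forall>H\<in>F2. \<not> induced_sub H G)"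

text \<open>Complete tripartite graph K_{m,n,p}: vertex (i,j) is the j-th vertex of part i.\<close>
definition K3part :: "nat \<Rightarrow> nat \<Rightarrow> nat \<Rightarrow> (nat \<times> nat) graph" where
  "K3part m n p = ({0}\<times>{..<m} \<union> {1}\<times>{..<n} \<union> {2}\<times>{..<p}, \<lambda>x y. fst x \<noteq> fst y)"

text \<open>T_n join (K_m + K_p): part 0 is the edgeless T_n, parts 1 and 2 the cliques.\<close>
definition TKK :: "nat \<Rightarrow> nat \<Rightarrow> nat \<Rightarrow> (nat \<times> nat) graph" where
  "TKK n m p = ({0}\<times>{..<n} \<union> {1}\<times>{..<m} \<union> {2}\<times>{..<p},
     \<lambda>x y. x \<noteq> y \<and> ((fst x = 0 \<longleftrightarrow> fst y \<noteq> 0) \<or> (fst x \<noteq> 0 \<and> fst x = fst y)))"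

end

theory Submission
  imports Defs
begin


lemma edge_graph_simps[simp]:
  "verts (edge_graph V es) = V"
  "adj (edge_graph V es) x y = ((x,y) \<in> set es \<or> (y,x) \<in> set es)"
  by (auto simp: verts_def adj_def edge_graph_def)

lemma induced_sub_trans:
  assumes "induced_sub F G" "induced_sub G H"
  shows "induced_sub F H"
proof -
  obtain f where f: "inj_on f (verts F)" "f ` verts F \<subseteq> verts G"
    "\<forall>x\<in>verts F. \<forall>y\<in>verts F. adj G (f x) (f y) \<longleftrightarrow> adj F x y"
    using assms(1) unfolding induced_sub_def by blast
  obtain g where g: "inj_on g (verts G)" "g ` verts G \<subseteq> verts H"
    "\<forall>x\<in>verts G. \<forall>y\<in>verts G. adj H (g x) (g y) \<longleftrightarrow> adj G x y"
    using assms(2) unfolding induced_sub_def by blast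
  show ?thesis unfolding induced_sub_def
    apply (rule exI[of _ "g \<circ> f"])
    using f g by (auto simp: inj_on_def subset_eq)
qed

definition RT :: "nat \<Rightarrow> nat \<Rightarrow> bool" where
  "RT a b \<longleftrightarrow> ((a = 0 \<longleftrightarrow> b \<noteq> 0) \<or> (a \<noteq> 0 \<and> a = b))"

lemma K3_col:
  assumes "induced_sub (edge_graph {1..k} es) (K3part m n p)"
  shows "\<exists>c. (\<forall>i\<in>{1..k}. c i < (3::nat)) \<and> (\<forall>i\<in>{1..k}. \<forall>j\<in>{1..k}. c i \<noteq> c j \<longleftrightarrow> ((i,j) \<in> set es \<or> (j,i) \<in> set es))"
proof -
  obtain f where f: "f ` {1..k} \<subseteq> verts (K3part m n p)"
    "\<forall>x\<in>{1..k}. \<forall>y\<in>{1..k}. adj (K3part m n p) (f x) (f y) \<longleftrightarrow> ((x,y) \<in> set es \<or> (y,x) \<in> set es)"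
    using assms unfolding induced_sub_def by auto
  show ?thesis
    apply (rule exI[of _ "\<lambda>i. fst (f i)"])
    using f by (auto simp: K3part_def verts_def adj_def)
qed

lemma TKK_adj: "adj (TKK n m p) a b = (a \<noteq> b \<and> RT (fst a) (fst b))"
  unfolding TKK_def adj_def RT_def by auto

lemma TKK_col:
  assumes "induced_sub (edge_graph {1..k} es) (TKK n m p)"
  shows "\<exists>c. (\<forall>i\<in>{1..k}. c i < (3::nat)) \<and> (\<forall>i\<in>{1..k}. \<forall>j\<in>{1..k}. (i \<noteq> j \<and> RT (c i) (c j)) \<longleftrightarrow> ((i,j) \<in> set es \<or> (j,i) \<in> set es))"
proof -
  obtain f where f: "inj_on f {1..k}" "f ` {1..k} \<subseteq> verts (TKK n m p)"
    "\<forall>x\<in>{1..k}. \<forall>y\<in>{1..k}. adj (TKK n m p) (f x) (f y) \<longleftrightarrow> ((x,y) \<in> set es \<or> (y,x) \<in> set es)"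
    using assms unfolding induced_sub_def by auto
  have fa: "\<forall>x\<in>{1..k}. \<forall>y\<in>{1..k}. adj (TKK n m p) (f x) (f y) \<longleftrightarrow> (x \<noteq> y \<and> RT (fst (f x)) (fst (f y)))"
  proof (intro ballI)
    fix x y assume "x \<in> {1..k}" "y \<in> {1..k}"
    then have "f x = f y \<longleftrightarrow> x = y" using f(1) by (auto dest: inj_onD)
    then show "adj (TKK n m p) (f x) (f y) \<longleftrightarrow> (x \<noteq> y \<and> RT (fst (f x)) (fst (f y)))"
      by (simp add: TKK_adj)
  qed
  show ?thesis
    apply (rule exI[of _ "\<lambda>i. fst (f i)"])
    using f fa by (auto simp: TKK_def verts_def)
qed

lemma s4: "{1..4::nat} = {1,2,3,4}" by auto
lemma s5: "{1..5::nat} = {1,2,3,4,5}" by auto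
lemma s6: "{1..6::nat} = {1,2,3,4,5,6}" by auto

lemma less3: "(c::nat) < 3 \<longleftrightarrow> c = 0 \<or> c = 1 \<or> c = 2" by auto

lemma no_P4_K3: "\<not> induced_sub P4 (K3part m n p)"
proof
  assume "induced_sub P4 (K3part m n p)"
  from K3_col[OF this[unfolded P4_def]] obtain c :: "nat \<Rightarrow> nat" where c: "\<forall>i\<in>{1..4}. c i < 3"
    "\<forall>i\<in>{1..4}. \<forall>j\<in>{1..4}. c i \<noteq> c j \<longleftrightarrow> ((i,j) \<in> set [(1, 2), (2, 3), (3, 4)] \<or> (j,i) \<in> set [(1, 2), (2, 3), (3, 4)])" by blast
  have G: "\<forall>a\<in>{0,1,2::nat}. \<forall>b\<in>{0,1,2::nat}. \<forall>c\<in>{0,1,2::nat}. \<forall>d\<in>{0,1,2::nat}. (a \<noteq> b \<and> a = c \<and> a = d \<and> b \<noteq> c \<and> b = d \<and> c \<noteq> d) \<longrightarrow> False" by (simp add: RT_def)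
  have i1: "1 \<in> {1..4::nat}" by simp
  have i2: "2 \<in> {1..4::nat}" by simp
  have i3: "3 \<in> {1..4::nat}" by simp
  have i4: "4 \<in> {1..4::nat}" by simp
  have m1: "c 1 \<in> {0,1,2}" using c(1)[rule_format, OF i1] by auto
  have m2: "c 2 \<in> {0,1,2}" using c(1)[rule_format, OF i2] by auto
  have m3: "c 3 \<in> {0,1,2}" using c(1)[rule_format, OF i3] by auto
  have m4: "c 4 \<in> {0,1,2}" using c(1)[rule_format, OF i4] by auto
  have p1_2: "(c 1) \<noteq> (c 2)" using c(2)[rule_format, OF i1 i2] by simp
  have p1_3: "(c 1) = (c 3)" using c(2)[rule_format, OF i1 i3] by simp
  have p1_4: "(c 1) = (c 4)" using c(2)[rule_format, OF i1 i4] by simp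
  have p2_3: "(c 2) \<noteq> (c 3)" using c(2)[rule_format, OF i2 i3] by simp
  have p2_4: "(c 2) = (c 4)" using c(2)[rule_format, OF i2 i4] by simp
  have p3_4: "(c 3) \<noteq> (c 4)" using c(2)[rule_format, OF i3 i4] by simp
  have C: "(c 1) \<noteq> (c 2) \<and> (c 1) = (c 3) \<and> (c 1) = (c 4) \<and> (c 2) \<noteq> (c 3) \<and> (c 2) = (c 4) \<and> (c 3) \<noteq> (c 4)" by (intro conjI p1_2 p1_3 p1_4 p2_3 p2_4 p3_4)
  show False using G[rule_format, OF m1 m2 m3 m4 C] .
qed

lemma no_K5_minus_S2_K3: "\<not> induced_sub K5_minus_S2 (K3part m n p)"
proof
  assume "induced_sub K5_minus_S2 (K3part m n p)"
  from K3_col[OF this[unfolded K5_minus_S2_def]] obtain c :: "nat \<Rightarrow> nat" where c: "\<forall>i\<in>{1..5}. c i < 3"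
    "\<forall>i\<in>{1..5}. \<forall>j\<in>{1..5}. c i \<noteq> c j \<longleftrightarrow> ((i,j) \<in> set [(1, 3), (1, 4), (1, 5), (2, 4), (2, 5), (3, 4), (3, 5), (4, 5)] \<or> (j,i) \<in> set [(1, 3), (1, 4), (1, 5), (2, 4), (2, 5), (3, 4), (3, 5), (4, 5)])" by blast
  have G: "\<forall>a\<in>{0,1,2::nat}. \<forall>b\<in>{0,1,2::nat}. \<forall>c\<in>{0,1,2::nat}. \<forall>d\<in>{0,1,2::nat}. \<forall>e\<in>{0,1,2::nat}. (a = b \<and> a \<noteq> c \<and> a \<noteq> d \<and> a \<noteq> e \<and> b = c \<and> b \<noteq> d \<and> b \<noteq> e \<and> c \<noteq> d \<and> c \<noteq> e \<and> d \<noteq> e) \<longrightarrow> False" by (simp add: RT_def)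
  have i1: "1 \<in> {1..5::nat}" by simp
  have i2: "2 \<in> {1..5::nat}" by simp
  have i3: "3 \<in> {1..5::nat}" by simp
  have i4: "4 \<in> {1..5::nat}" by simp
  have i5: "5 \<in> {1..5::nat}" by simp
  have m1: "c 1 \<in> {0,1,2}" using c(1)[rule_format, OF i1] by auto
  have m2: "c 2 \<in> {0,1,2}" using c(1)[rule_format, OF i2] by auto
  have m3: "c 3 \<in> {0,1,2}" using c(1)[rule_format, OF i3] by auto
  have m4: "c 4 \<in> {0,1,2}" using c(1)[rule_format, OF i4] by auto
  have m5: "c 5 \<in> {0,1,2}" using c(1)[rule_format, OF i5] by auto
  have p1_2: "(c 1) = (c 2)" using c(2)[rule_format, OF i1 i2] by simp
  have p1_3: "(c 1) \<noteq> (c 3)" using c(2)[rule_format, OF i1 i3] by simp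
  have p1_4: "(c 1) \<noteq> (c 4)" using c(2)[rule_format, OF i1 i4] by simp
  have p1_5: "(c 1) \<noteq> (c 5)" using c(2)[rule_format, OF i1 i5] by simp
  have p2_3: "(c 2) = (c 3)" using c(2)[rule_format, OF i2 i3] by simp
  have p2_4: "(c 2) \<noteq> (c 4)" using c(2)[rule_format, OF i2 i4] by simp
  have p2_5: "(c 2) \<noteq> (c 5)" using c(2)[rule_format, OF i2 i5] by simp
  have p3_4: "(c 3) \<noteq> (c 4)" using c(2)[rule_format, OF i3 i4] by simp
  have p3_5: "(c 3) \<noteq> (c 5)" using c(2)[rule_format, OF i3 i5] by simp
  have p4_5: "(c 4) \<noteq> (c 5)" using c(2)[rule_format, OF i4 i5] by simp
  have C: "(c 1) = (c 2) \<and> (c 1) \<noteq> (c 3) \<and> (c 1) \<noteq> (c 4) \<and> (c 1) \<noteq> (c 5) \<and> (c 2) = (c 3) \<and> (c 2) \<noteq> (c 4) \<and> (c 2) \<noteq> (c 5) \<and> (c 3) \<noteq> (c 4) \<and> (c 3) \<noteq> (c 5) \<and> (c 4) \<noteq> (c 5)" by (intro conjI p1_2 p1_3 p1_4 p1_5 p2_3 p2_4 p2_5 p3_4 p3_5 p4_5)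
  show False using G[rule_format, OF m1 m2 m3 m4 m5 C] .
qed

lemma no_K6_minus_M2_K3: "\<not> induced_sub K6_minus_M2 (K3part m n p)"
proof
  assume "induced_sub K6_minus_M2 (K3part m n p)"
  from K3_col[OF this[unfolded K6_minus_M2_def]] obtain c :: "nat \<Rightarrow> nat" where c: "\<forall>i\<in>{1..6}. c i < 3"
    "\<forall>i\<in>{1..6}. \<forall>j\<in>{1..6}. c i \<noteq> c j \<longleftrightarrow> ((i,j) \<in> set [(1, 3), (1, 4), (1, 5), (1, 6), (2, 3), (2, 4), (2, 5), (2, 6), (3, 5), (3, 6), (4, 5), (4, 6), (5, 6)] \<or> (j,i) \<in> set [(1, 3), (1, 4), (1, 5), (1, 6), (2, 3), (2, 4), (2, 5), (2, 6), (3, 5), (3, 6), (4, 5), (4, 6), (5, 6)])" by blast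
  have G: "\<forall>a\<in>{0,1,2::nat}. \<forall>b\<in>{0,1,2::nat}. \<forall>c\<in>{0,1,2::nat}. \<forall>d\<in>{0,1,2::nat}. \<forall>e\<in>{0,1,2::nat}. \<forall>f\<in>{0,1,2::nat}. (a = b \<and> a \<noteq> c \<and> a \<noteq> d \<and> a \<noteq> e \<and> a \<noteq> f \<and> b \<noteq> c \<and> b \<noteq> d \<and> b \<noteq> e \<and> b \<noteq> f \<and> c = d \<and> c \<noteq> e \<and> c \<noteq> f \<and> d \<noteq> e \<and> d \<noteq> f \<and> e \<noteq> f) \<longrightarrow> False" by (simp add: RT_def)
  have i1: "1 \<in> {1..6::nat}" by simp
  have i2: "2 \<in> {1..6::nat}" by simp
  have i3: "3 \<in> {1..6::nat}" by simp
  have i4: "4 \<in> {1..6::nat}" by simp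
  have i5: "5 \<in> {1..6::nat}" by simp
  have i6: "6 \<in> {1..6::nat}" by simp
  have m1: "c 1 \<in> {0,1,2}" using c(1)[rule_format, OF i1] by auto
  have m2: "c 2 \<in> {0,1,2}" using c(1)[rule_format, OF i2] by auto
  have m3: "c 3 \<in> {0,1,2}" using c(1)[rule_format, OF i3] by auto
  have m4: "c 4 \<in> {0,1,2}" using c(1)[rule_format, OF i4] by auto
  have m5: "c 5 \<in> {0,1,2}" using c(1)[rule_format, OF i5] by auto
  have m6: "c 6 \<in> {0,1,2}" using c(1)[rule_format, OF i6] by auto
  have p1_2: "(c 1) = (c 2)" using c(2)[rule_format, OF i1 i2] by simp
  have p1_3: "(c 1) \<noteq> (c 3)" using c(2)[rule_format, OF i1 i3] by simp
  have p1_4: "(c 1) \<noteq> (c 4)" using c(2)[rule_format, OF i1 i4] by simp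
  have p1_5: "(c 1) \<noteq> (c 5)" using c(2)[rule_format, OF i1 i5] by simp
  have p1_6: "(c 1) \<noteq> (c 6)" using c(2)[rule_format, OF i1 i6] by simp
  have p2_3: "(c 2) \<noteq> (c 3)" using c(2)[rule_format, OF i2 i3] by simp
  have p2_4: "(c 2) \<noteq> (c 4)" using c(2)[rule_format, OF i2 i4] by simp
  have p2_5: "(c 2) \<noteq> (c 5)" using c(2)[rule_format, OF i2 i5] by simp
  have p2_6: "(c 2) \<noteq> (c 6)" using c(2)[rule_format, OF i2 i6] by simp
  have p3_4: "(c 3) = (c 4)" using c(2)[rule_format, OF i3 i4] by simp
  have p3_5: "(c 3) \<noteq> (c 5)" using c(2)[rule_format, OF i3 i5] by simp
  have p3_6: "(c 3) \<noteq> (c 6)" using c(2)[rule_format, OF i3 i6] by simp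
  have p4_5: "(c 4) \<noteq> (c 5)" using c(2)[rule_format, OF i4 i5] by simp
  have p4_6: "(c 4) \<noteq> (c 6)" using c(2)[rule_format, OF i4 i6] by simp
  have p5_6: "(c 5) \<noteq> (c 6)" using c(2)[rule_format, OF i5 i6] by simp
  have C: "(c 1) = (c 2) \<and> (c 1) \<noteq> (c 3) \<and> (c 1) \<noteq> (c 4) \<and> (c 1) \<noteq> (c 5) \<and> (c 1) \<noteq> (c 6) \<and> (c 2) \<noteq> (c 3) \<and> (c 2) \<noteq> (c 4) \<and> (c 2) \<noteq> (c 5) \<and> (c 2) \<noteq> (c 6) \<and> (c 3) = (c 4) \<and> (c 3) \<noteq> (c 5) \<and> (c 3) \<noteq> (c 6) \<and> (c 4) \<noteq> (c 5) \<and> (c 4) \<noteq> (c 6) \<and> (c 5) \<noteq> (c 6)" by (intro conjI p1_2 p1_3 p1_4 p1_5 p1_6 p2_3 p2_4 p2_5 p2_6 p3_4 p3_5 p3_6 p4_5 p4_6 p5_6)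
  show False using G[rule_format, OF m1 m2 m3 m4 m5 m6 C] .
qed

lemma no_F2_4_K3: "\<not> induced_sub F2_4 (K3part m n p)"
proof
  assume "induced_sub F2_4 (K3part m n p)"
  from K3_col[OF this[unfolded F2_4_def]] obtain c :: "nat \<Rightarrow> nat" where c: "\<forall>i\<in>{1..5}. c i < 3"
    "\<forall>i\<in>{1..5}. \<forall>j\<in>{1..5}. c i \<noteq> c j \<longleftrightarrow> ((i,j) \<in> set [(2, 3), (2, 4), (3, 4), (1, 4), (4, 5)] \<or> (j,i) \<in> set [(2, 3), (2, 4), (3, 4), (1, 4), (4, 5)])" by blast
  have G: "\<forall>a\<in>{0,1,2::nat}. \<forall>b\<in>{0,1,2::nat}. \<forall>c\<in>{0,1,2::nat}. \<forall>d\<in>{0,1,2::nat}. \<forall>e\<in>{0,1,2::nat}. (a = b \<and> a = c \<and> a \<noteq> d \<and> a = e \<and> b \<noteq> c \<and> b \<noteq> d \<and> b = e \<and> c \<noteq> d \<and> c = e \<and> d \<noteq> e) \<longrightarrow> False" by (simp add: RT_def)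
  have i1: "1 \<in> {1..5::nat}" by simp
  have i2: "2 \<in> {1..5::nat}" by simp
  have i3: "3 \<in> {1..5::nat}" by simp
  have i4: "4 \<in> {1..5::nat}" by simp
  have i5: "5 \<in> {1..5::nat}" by simp
  have m1: "c 1 \<in> {0,1,2}" using c(1)[rule_format, OF i1] by auto
  have m2: "c 2 \<in> {0,1,2}" using c(1)[rule_format, OF i2] by auto
  have m3: "c 3 \<in> {0,1,2}" using c(1)[rule_format, OF i3] by auto
  have m4: "c 4 \<in> {0,1,2}" using c(1)[rule_format, OF i4] by auto
  have m5: "c 5 \<in> {0,1,2}" using c(1)[rule_format, OF i5] by auto
  have p1_2: "(c 1) = (c 2)" using c(2)[rule_format, OF i1 i2] by simp
  have p1_3: "(c 1) = (c 3)" using c(2)[rule_format, OF i1 i3] by simp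
  have p1_4: "(c 1) \<noteq> (c 4)" using c(2)[rule_format, OF i1 i4] by simp
  have p1_5: "(c 1) = (c 5)" using c(2)[rule_format, OF i1 i5] by simp
  have p2_3: "(c 2) \<noteq> (c 3)" using c(2)[rule_format, OF i2 i3] by simp
  have p2_4: "(c 2) \<noteq> (c 4)" using c(2)[rule_format, OF i2 i4] by simp
  have p2_5: "(c 2) = (c 5)" using c(2)[rule_format, OF i2 i5] by simp
  have p3_4: "(c 3) \<noteq> (c 4)" using c(2)[rule_format, OF i3 i4] by simp
  have p3_5: "(c 3) = (c 5)" using c(2)[rule_format, OF i3 i5] by simp
  have p4_5: "(c 4) \<noteq> (c 5)" using c(2)[rule_format, OF i4 i5] by simp
  have C: "(c 1) = (c 2) \<and> (c 1) = (c 3) \<and> (c 1) \<noteq> (c 4) \<and> (c 1) = (c 5) \<and> (c 2) \<noteq> (c 3) \<and> (c 2) \<noteq> (c 4) \<and> (c 2) = (c 5) \<and> (c 3) \<noteq> (c 4) \<and> (c 3) = (c 5) \<and> (c 4) \<noteq> (c 5)" by (intro conjI p1_2 p1_3 p1_4 p1_5 p2_3 p2_4 p2_5 p3_4 p3_5 p4_5)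
  show False using G[rule_format, OF m1 m2 m3 m4 m5 C] .
qed

lemma no_F2_5_K3: "\<not> induced_sub F2_5 (K3part m n p)"
proof
  assume "induced_sub F2_5 (K3part m n p)"
  from K3_col[OF this[unfolded F2_5_def]] obtain c :: "nat \<Rightarrow> nat" where c: "\<forall>i\<in>{1..5}. c i < 3"
    "\<forall>i\<in>{1..5}. \<forall>j\<in>{1..5}. c i \<noteq> c j \<longleftrightarrow> ((i,j) \<in> set [(1, 2), (1, 4), (2, 3), (2, 4), (3, 4), (4, 5)] \<or> (j,i) \<in> set [(1, 2), (1, 4), (2, 3), (2, 4), (3, 4), (4, 5)])" by blast
  have G: "\<forall>a\<in>{0,1,2::nat}. \<forall>b\<in>{0,1,2::nat}. \<forall>c\<in>{0,1,2::nat}. \<forall>d\<in>{0,1,2::nat}. \<forall>e\<in>{0,1,2::nat}. (a \<noteq> b \<and> a = c \<and> a \<noteq> d \<and> a = e \<and> b \<noteq> c \<and> b \<noteq> d \<and> b = e \<and> c \<noteq> d \<and> c = e \<and> d \<noteq> e) \<longrightarrow> False" by (simp add: RT_def)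
  have i1: "1 \<in> {1..5::nat}" by simp
  have i2: "2 \<in> {1..5::nat}" by simp
  have i3: "3 \<in> {1..5::nat}" by simp
  have i4: "4 \<in> {1..5::nat}" by simp
  have i5: "5 \<in> {1..5::nat}" by simp
  have m1: "c 1 \<in> {0,1,2}" using c(1)[rule_format, OF i1] by auto
  have m2: "c 2 \<in> {0,1,2}" using c(1)[rule_format, OF i2] by auto
  have m3: "c 3 \<in> {0,1,2}" using c(1)[rule_format, OF i3] by auto
  have m4: "c 4 \<in> {0,1,2}" using c(1)[rule_format, OF i4] by auto
  have m5: "c 5 \<in> {0,1,2}" using c(1)[rule_format, OF i5] by auto
  have p1_2: "(c 1) \<noteq> (c 2)" using c(2)[rule_format, OF i1 i2] by simp
  have p1_3: "(c 1) = (c 3)" using c(2)[rule_format, OF i1 i3] by simp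
  have p1_4: "(c 1) \<noteq> (c 4)" using c(2)[rule_format, OF i1 i4] by simp
  have p1_5: "(c 1) = (c 5)" using c(2)[rule_format, OF i1 i5] by simp
  have p2_3: "(c 2) \<noteq> (c 3)" using c(2)[rule_format, OF i2 i3] by simp
  have p2_4: "(c 2) \<noteq> (c 4)" using c(2)[rule_format, OF i2 i4] by simp
  have p2_5: "(c 2) = (c 5)" using c(2)[rule_format, OF i2 i5] by simp
  have p3_4: "(c 3) \<noteq> (c 4)" using c(2)[rule_format, OF i3 i4] by simp
  have p3_5: "(c 3) = (c 5)" using c(2)[rule_format, OF i3 i5] by simp
  have p4_5: "(c 4) \<noteq> (c 5)" using c(2)[rule_format, OF i4 i5] by simp
  have C: "(c 1) \<noteq> (c 2) \<and> (c 1) = (c 3) \<and> (c 1) \<noteq> (c 4) \<and> (c 1) = (c 5) \<and> (c 2) \<noteq> (c 3) \<and> (c 2) \<noteq> (c 4) \<and> (c 2) = (c 5) \<and> (c 3) \<noteq> (c 4) \<and> (c 3) = (c 5) \<and> (c 4) \<noteq> (c 5)" by (intro conjI p1_2 p1_3 p1_4 p1_5 p2_3 p2_4 p2_5 p3_4 p3_5 p4_5)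
  show False using G[rule_format, OF m1 m2 m3 m4 m5 C] .
qed

lemma no_P4_TKK: "\<not> induced_sub P4 (TKK n m p)"
proof
  assume "induced_sub P4 (TKK n m p)"
  from TKK_col[OF this[unfolded P4_def]] obtain c :: "nat \<Rightarrow> nat" where c: "\<forall>i\<in>{1..4}. c i < 3"
    "\<forall>i\<in>{1..4}. \<forall>j\<in>{1..4}. (i \<noteq> j \<and> RT (c i) (c j)) \<longleftrightarrow> ((i,j) \<in> set [(1, 2), (2, 3), (3, 4)] \<or> (j,i) \<in> set [(1, 2), (2, 3), (3, 4)])" by blast
  have G: "\<forall>a\<in>{0,1,2::nat}. \<forall>b\<in>{0,1,2::nat}. \<forall>c\<in>{0,1,2::nat}. \<forall>d\<in>{0,1,2::nat}. (RT a b \<and> \<not> RT a c \<and> \<not> RT a d \<and> RT b c \<and> \<not> RT b d \<and> RT c d) \<longrightarrow> False" by (simp add: RT_def)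
  have i1: "1 \<in> {1..4::nat}" by simp
  have i2: "2 \<in> {1..4::nat}" by simp
  have i3: "3 \<in> {1..4::nat}" by simp
  have i4: "4 \<in> {1..4::nat}" by simp
  have m1: "c 1 \<in> {0,1,2}" using c(1)[rule_format, OF i1] by auto
  have m2: "c 2 \<in> {0,1,2}" using c(1)[rule_format, OF i2] by auto
  have m3: "c 3 \<in> {0,1,2}" using c(1)[rule_format, OF i3] by auto
  have m4: "c 4 \<in> {0,1,2}" using c(1)[rule_format, OF i4] by auto
  have p1_2: "RT (c 1) (c 2)" using c(2)[rule_format, OF i1 i2] by simp
  have p1_3: "\<not> RT (c 1) (c 3)" using c(2)[rule_format, OF i1 i3] by simp
  have p1_4: "\<not> RT (c 1) (c 4)" using c(2)[rule_format, OF i1 i4] by simp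
  have p2_3: "RT (c 2) (c 3)" using c(2)[rule_format, OF i2 i3] by simp
  have p2_4: "\<not> RT (c 2) (c 4)" using c(2)[rule_format, OF i2 i4] by simp
  have p3_4: "RT (c 3) (c 4)" using c(2)[rule_format, OF i3 i4] by simp
  have C: "RT (c 1) (c 2) \<and> \<not> RT (c 1) (c 3) \<and> \<not> RT (c 1) (c 4) \<and> RT (c 2) (c 3) \<and> \<not> RT (c 2) (c 4) \<and> RT (c 3) (c 4)" by (intro conjI p1_2 p1_3 p1_4 p2_3 p2_4 p3_4)
  show False using G[rule_format, OF m1 m2 m3 m4 C] .
qed

lemma no_K5_minus_S2_TKK: "\<not> induced_sub K5_minus_S2 (TKK n m p)"
proof
  assume "induced_sub K5_minus_S2 (TKK n m p)"
  from TKK_col[OF this[unfolded K5_minus_S2_def]] obtain c :: "nat \<Rightarrow> nat" where c: "\<forall>i\<in>{1..5}. c i < 3"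
    "\<forall>i\<in>{1..5}. \<forall>j\<in>{1..5}. (i \<noteq> j \<and> RT (c i) (c j)) \<longleftrightarrow> ((i,j) \<in> set [(1, 3), (1, 4), (1, 5), (2, 4), (2, 5), (3, 4), (3, 5), (4, 5)] \<or> (j,i) \<in> set [(1, 3), (1, 4), (1, 5), (2, 4), (2, 5), (3, 4), (3, 5), (4, 5)])" by blast
  have G: "\<forall>a\<in>{0,1,2::nat}. \<forall>b\<in>{0,1,2::nat}. \<forall>c\<in>{0,1,2::nat}. \<forall>d\<in>{0,1,2::nat}. \<forall>e\<in>{0,1,2::nat}. (\<not> RT a b \<and> RT a c \<and> RT a d \<and> RT a e \<and> \<not> RT b c \<and> RT b d \<and> RT b e \<and> RT c d \<and> RT c e \<and> RT d e) \<longrightarrow> False" by (simp add: RT_def)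
  have i1: "1 \<in> {1..5::nat}" by simp
  have i2: "2 \<in> {1..5::nat}" by simp
  have i3: "3 \<in> {1..5::nat}" by simp
  have i4: "4 \<in> {1..5::nat}" by simp
  have i5: "5 \<in> {1..5::nat}" by simp
  have m1: "c 1 \<in> {0,1,2}" using c(1)[rule_format, OF i1] by auto
  have m2: "c 2 \<in> {0,1,2}" using c(1)[rule_format, OF i2] by auto
  have m3: "c 3 \<in> {0,1,2}" using c(1)[rule_format, OF i3] by auto
  have m4: "c 4 \<in> {0,1,2}" using c(1)[rule_format, OF i4] by auto
  have m5: "c 5 \<in> {0,1,2}" using c(1)[rule_format, OF i5] by auto
  have p1_2: "\<not> RT (c 1) (c 2)" using c(2)[rule_format, OF i1 i2] by simp
  have p1_3: "RT (c 1) (c 3)" using c(2)[rule_format, OF i1 i3] by simp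
  have p1_4: "RT (c 1) (c 4)" using c(2)[rule_format, OF i1 i4] by simp
  have p1_5: "RT (c 1) (c 5)" using c(2)[rule_format, OF i1 i5] by simp
  have p2_3: "\<not> RT (c 2) (c 3)" using c(2)[rule_format, OF i2 i3] by simp
  have p2_4: "RT (c 2) (c 4)" using c(2)[rule_format, OF i2 i4] by simp
  have p2_5: "RT (c 2) (c 5)" using c(2)[rule_format, OF i2 i5] by simp
  have p3_4: "RT (c 3) (c 4)" using c(2)[rule_format, OF i3 i4] by simp
  have p3_5: "RT (c 3) (c 5)" using c(2)[rule_format, OF i3 i5] by simp
  have p4_5: "RT (c 4) (c 5)" using c(2)[rule_format, OF i4 i5] by simp
  have C: "\<not> RT (c 1) (c 2) \<and> RT (c 1) (c 3) \<and> RT (c 1) (c 4) \<and> RT (c 1) (c 5) \<and> \<not> RT (c 2) (c 3) \<and> RT (c 2) (c 4) \<and> RT (c 2) (c 5) \<and> RT (c 3) (c 4) \<and> RT (c 3) (c 5) \<and> RT (c 4) (c 5)" by (intro conjI p1_2 p1_3 p1_4 p1_5 p2_3 p2_4 p2_5 p3_4 p3_5 p4_5)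
  show False using G[rule_format, OF m1 m2 m3 m4 m5 C] .
qed

lemma no_K6_minus_M2_TKK: "\<not> induced_sub K6_minus_M2 (TKK n m p)"
proof
  assume "induced_sub K6_minus_M2 (TKK n m p)"
  from TKK_col[OF this[unfolded K6_minus_M2_def]] obtain c :: "nat \<Rightarrow> nat" where c: "\<forall>i\<in>{1..6}. c i < 3"
    "\<forall>i\<in>{1..6}. \<forall>j\<in>{1..6}. (i \<noteq> j \<and> RT (c i) (c j)) \<longleftrightarrow> ((i,j) \<in> set [(1, 3), (1, 4), (1, 5), (1, 6), (2, 3), (2, 4), (2, 5), (2, 6), (3, 5), (3, 6), (4, 5), (4, 6), (5, 6)] \<or> (j,i) \<in> set [(1, 3), (1, 4), (1, 5), (1, 6), (2, 3), (2, 4), (2, 5), (2, 6), (3, 5), (3, 6), (4, 5), (4, 6), (5, 6)])" by blast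
  have G: "\<forall>a\<in>{0,1,2::nat}. \<forall>b\<in>{0,1,2::nat}. \<forall>c\<in>{0,1,2::nat}. \<forall>d\<in>{0,1,2::nat}. \<forall>e\<in>{0,1,2::nat}. \<forall>f\<in>{0,1,2::nat}. (\<not> RT a b \<and> RT a c \<and> RT a d \<and> RT a e \<and> RT a f \<and> RT b c \<and> RT b d \<and> RT b e \<and> RT b f \<and> \<not> RT c d \<and> RT c e \<and> RT c f \<and> RT d e \<and> RT d f \<and> RT e f) \<longrightarrow> False" by (simp add: RT_def)
  have i1: "1 \<in> {1..6::nat}" by simp
  have i2: "2 \<in> {1..6::nat}" by simp
  have i3: "3 \<in> {1..6::nat}" by simp
  have i4: "4 \<in> {1..6::nat}" by simp
  have i5: "5 \<in> {1..6::nat}" by simp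
  have i6: "6 \<in> {1..6::nat}" by simp
  have m1: "c 1 \<in> {0,1,2}" using c(1)[rule_format, OF i1] by auto
  have m2: "c 2 \<in> {0,1,2}" using c(1)[rule_format, OF i2] by auto
  have m3: "c 3 \<in> {0,1,2}" using c(1)[rule_format, OF i3] by auto
  have m4: "c 4 \<in> {0,1,2}" using c(1)[rule_format, OF i4] by auto
  have m5: "c 5 \<in> {0,1,2}" using c(1)[rule_format, OF i5] by auto
  have m6: "c 6 \<in> {0,1,2}" using c(1)[rule_format, OF i6] by auto
  have p1_2: "\<not> RT (c 1) (c 2)" using c(2)[rule_format, OF i1 i2] by simp
  have p1_3: "RT (c 1) (c 3)" using c(2)[rule_format, OF i1 i3] by simp
  have p1_4: "RT (c 1) (c 4)" using c(2)[rule_format, OF i1 i4] by simp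
  have p1_5: "RT (c 1) (c 5)" using c(2)[rule_format, OF i1 i5] by simp
  have p1_6: "RT (c 1) (c 6)" using c(2)[rule_format, OF i1 i6] by simp
  have p2_3: "RT (c 2) (c 3)" using c(2)[rule_format, OF i2 i3] by simp
  have p2_4: "RT (c 2) (c 4)" using c(2)[rule_format, OF i2 i4] by simp
  have p2_5: "RT (c 2) (c 5)" using c(2)[rule_format, OF i2 i5] by simp
  have p2_6: "RT (c 2) (c 6)" using c(2)[rule_format, OF i2 i6] by simp
  have p3_4: "\<not> RT (c 3) (c 4)" using c(2)[rule_format, OF i3 i4] by simp
  have p3_5: "RT (c 3) (c 5)" using c(2)[rule_format, OF i3 i5] by simp
  have p3_6: "RT (c 3) (c 6)" using c(2)[rule_format, OF i3 i6] by simp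
  have p4_5: "RT (c 4) (c 5)" using c(2)[rule_format, OF i4 i5] by simp
  have p4_6: "RT (c 4) (c 6)" using c(2)[rule_format, OF i4 i6] by simp
  have p5_6: "RT (c 5) (c 6)" using c(2)[rule_format, OF i5 i6] by simp
  have C: "\<not> RT (c 1) (c 2) \<and> RT (c 1) (c 3) \<and> RT (c 1) (c 4) \<and> RT (c 1) (c 5) \<and> RT (c 1) (c 6) \<and> RT (c 2) (c 3) \<and> RT (c 2) (c 4) \<and> RT (c 2) (c 5) \<and> RT (c 2) (c 6) \<and> \<not> RT (c 3) (c 4) \<and> RT (c 3) (c 5) \<and> RT (c 3) (c 6) \<and> RT (c 4) (c 5) \<and> RT (c 4) (c 6) \<and> RT (c 5) (c 6)" by (intro conjI p1_2 p1_3 p1_4 p1_5 p1_6 p2_3 p2_4 p2_5 p2_6 p3_4 p3_5 p3_6 p4_5 p4_6 p5_6)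
  show False using G[rule_format, OF m1 m2 m3 m4 m5 m6 C] .
qed

lemma no_F2_4_TKK: "\<not> induced_sub F2_4 (TKK n m p)"
proof
  assume "induced_sub F2_4 (TKK n m p)"
  from TKK_col[OF this[unfolded F2_4_def]] obtain c :: "nat \<Rightarrow> nat" where c: "\<forall>i\<in>{1..5}. c i < 3"
    "\<forall>i\<in>{1..5}. \<forall>j\<in>{1..5}. (i \<noteq> j \<and> RT (c i) (c j)) \<longleftrightarrow> ((i,j) \<in> set [(2, 3), (2, 4), (3, 4), (1, 4), (4, 5)] \<or> (j,i) \<in> set [(2, 3), (2, 4), (3, 4), (1, 4), (4, 5)])" by blast
  have G: "\<forall>a\<in>{0,1,2::nat}. \<forall>b\<in>{0,1,2::nat}. \<forall>c\<in>{0,1,2::nat}. \<forall>d\<in>{0,1,2::nat}. \<forall>e\<in>{0,1,2::nat}. (\<not> RT a b \<and> \<not> RT a c \<and> RT a d \<and> \<not> RT a e \<and> RT b c \<and> RT b d \<and> \<not> RT b e \<and> RT c d \<and> \<not> RT c e \<and> RT d e) \<longrightarrow> False" by (simp add: RT_def)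
  have i1: "1 \<in> {1..5::nat}" by simp
  have i2: "2 \<in> {1..5::nat}" by simp
  have i3: "3 \<in> {1..5::nat}" by simp
  have i4: "4 \<in> {1..5::nat}" by simp
  have i5: "5 \<in> {1..5::nat}" by simp
  have m1: "c 1 \<in> {0,1,2}" using c(1)[rule_format, OF i1] by auto
  have m2: "c 2 \<in> {0,1,2}" using c(1)[rule_format, OF i2] by auto
  have m3: "c 3 \<in> {0,1,2}" using c(1)[rule_format, OF i3] by auto
  have m4: "c 4 \<in> {0,1,2}" using c(1)[rule_format, OF i4] by auto
  have m5: "c 5 \<in> {0,1,2}" using c(1)[rule_format, OF i5] by auto
  have p1_2: "\<not> RT (c 1) (c 2)" using c(2)[rule_format, OF i1 i2] by simp
  have p1_3: "\<not> RT (c 1) (c 3)" using c(2)[rule_format, OF i1 i3] by simp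
  have p1_4: "RT (c 1) (c 4)" using c(2)[rule_format, OF i1 i4] by simp
  have p1_5: "\<not> RT (c 1) (c 5)" using c(2)[rule_format, OF i1 i5] by simp
  have p2_3: "RT (c 2) (c 3)" using c(2)[rule_format, OF i2 i3] by simp
  have p2_4: "RT (c 2) (c 4)" using c(2)[rule_format, OF i2 i4] by simp
  have p2_5: "\<not> RT (c 2) (c 5)" using c(2)[rule_format, OF i2 i5] by simp
  have p3_4: "RT (c 3) (c 4)" using c(2)[rule_format, OF i3 i4] by simp
  have p3_5: "\<not> RT (c 3) (c 5)" using c(2)[rule_format, OF i3 i5] by simp
  have p4_5: "RT (c 4) (c 5)" using c(2)[rule_format, OF i4 i5] by simp
  have C: "\<not> RT (c 1) (c 2) \<and> \<not> RT (c 1) (c 3) \<and> RT (c 1) (c 4) \<and> \<not> RT (c 1) (c 5) \<and> RT (c 2) (c 3) \<and> RT (c 2) (c 4) \<and> \<not> RT (c 2) (c 5) \<and> RT (c 3) (c 4) \<and> \<not> RT (c 3) (c 5) \<and> RT (c 4) (c 5)" by (intro conjI p1_2 p1_3 p1_4 p1_5 p2_3 p2_4 p2_5 p3_4 p3_5 p4_5)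
  show False using G[rule_format, OF m1 m2 m3 m4 m5 C] .
qed

lemma no_F2_5_TKK: "\<not> induced_sub F2_5 (TKK n m p)"
proof
  assume "induced_sub F2_5 (TKK n m p)"
  from TKK_col[OF this[unfolded F2_5_def]] obtain c :: "nat \<Rightarrow> nat" where c: "\<forall>i\<in>{1..5}. c i < 3"
    "\<forall>i\<in>{1..5}. \<forall>j\<in>{1..5}. (i \<noteq> j \<and> RT (c i) (c j)) \<longleftrightarrow> ((i,j) \<in> set [(1, 2), (1, 4), (2, 3), (2, 4), (3, 4), (4, 5)] \<or> (j,i) \<in> set [(1, 2), (1, 4), (2, 3), (2, 4), (3, 4), (4, 5)])" by blast
  have G: "\<forall>a\<in>{0,1,2::nat}. \<forall>b\<in>{0,1,2::nat}. \<forall>c\<in>{0,1,2::nat}. \<forall>d\<in>{0,1,2::nat}. \<forall>e\<in>{0,1,2::nat}. (RT a b \<and> \<not> RT a c \<and> RT a d \<and> \<not> RT a e \<and> RT b c \<and> RT b d \<and> \<not> RT b e \<and> RT c d \<and> \<not> RT c e \<and> RT d e) \<longrightarrow> False" by (simp add: RT_def)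
  have i1: "1 \<in> {1..5::nat}" by simp
  have i2: "2 \<in> {1..5::nat}" by simp
  have i3: "3 \<in> {1..5::nat}" by simp
  have i4: "4 \<in> {1..5::nat}" by simp
  have i5: "5 \<in> {1..5::nat}" by simp
  have m1: "c 1 \<in> {0,1,2}" using c(1)[rule_format, OF i1] by auto
  have m2: "c 2 \<in> {0,1,2}" using c(1)[rule_format, OF i2] by auto
  have m3: "c 3 \<in> {0,1,2}" using c(1)[rule_format, OF i3] by auto
  have m4: "c 4 \<in> {0,1,2}" using c(1)[rule_format, OF i4] by auto
  have m5: "c 5 \<in> {0,1,2}" using c(1)[rule_format, OF i5] by auto
  have p1_2: "RT (c 1) (c 2)" using c(2)[rule_format, OF i1 i2] by simp
  have p1_3: "\<not> RT (c 1) (c 3)" using c(2)[rule_format, OF i1 i3] by simp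
  have p1_4: "RT (c 1) (c 4)" using c(2)[rule_format, OF i1 i4] by simp
  have p1_5: "\<not> RT (c 1) (c 5)" using c(2)[rule_format, OF i1 i5] by simp
  have p2_3: "RT (c 2) (c 3)" using c(2)[rule_format, OF i2 i3] by simp
  have p2_4: "RT (c 2) (c 4)" using c(2)[rule_format, OF i2 i4] by simp
  have p2_5: "\<not> RT (c 2) (c 5)" using c(2)[rule_format, OF i2 i5] by simp
  have p3_4: "RT (c 3) (c 4)" using c(2)[rule_format, OF i3 i4] by simp
  have p3_5: "\<not> RT (c 3) (c 5)" using c(2)[rule_format, OF i3 i5] by simp
  have p4_5: "RT (c 4) (c 5)" using c(2)[rule_format, OF i4 i5] by simp
  have C: "RT (c 1) (c 2) \<and> \<not> RT (c 1) (c 3) \<and> RT (c 1) (c 4) \<and> \<not> RT (c 1) (c 5) \<and> RT (c 2) (c 3) \<and> RT (c 2) (c 4) \<and> \<not> RT (c 2) (c 5) \<and> RT (c 3) (c 4) \<and> \<not> RT (c 3) (c 5) \<and> RT (c 4) (c 5)" by (intro conjI p1_2 p1_3 p1_4 p1_5 p2_3 p2_4 p2_5 p3_4 p3_5 p4_5)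
  show False using G[rule_format, OF m1 m2 m3 m4 m5 C] .
qed

lemma F2_hosts: "H \<in> F2 \<Longrightarrow> \<not> induced_sub H (K3part m n p) \<and> \<not> induced_sub H (TKK n m p)"
  unfolding F2_def by (auto simp: no_P4_K3 no_P4_TKK no_K5_minus_S2_K3 no_K5_minus_S2_TKK no_K6_minus_M2_K3 no_K6_minus_M2_TKK
   no_F2_4_K3 no_F2_4_TKK no_F2_5_K3 no_F2_5_TKK)



lemma sgraph_sym: "sgraph G \<Longrightarrow> adj G x y = adj G y x"
  unfolding sgraph_def by blast

lemma ind_list:
  assumes "distinct xs" "set xs \<subseteq> verts G" "length xs = k"
   "\<forall>i\<in>{1..k}. \<forall>j\<in>{1..k}. adj G (xs!(i-1)) (xs!(j-1)) \<longleftrightarrow> ((i,j)\<in>set es \<or> (j,i)\<in>set es)"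
  shows "induced_sub (edge_graph {1..k} es) G"
  unfolding induced_sub_def
proof (rule exI[of _ "\<lambda>i. xs!(i-1)"], intro conjI)
  show "inj_on (\<lambda>i. xs ! (i - 1)) (verts (edge_graph {1..k} es))"
    using assms(1,3) by (auto simp: inj_on_def nth_eq_iff_index_eq)
  show "(\<lambda>i. xs ! (i - 1)) ` verts (edge_graph {1..k} es) \<subseteq> verts G"
    using assms(2,3) by (auto intro!: subsetD[OF assms(2)] nth_mem)
  show "\<forall>x\<in>verts (edge_graph {1..k} es). \<forall>y\<in>verts (edge_graph {1..k} es).
       adj G (xs ! (x - 1)) (xs ! (y - 1)) = adj (edge_graph {1..k} es) x y"
    using assms(4) by simp
qed

context
  fixes G :: "'a graph"
  assumes sg: "sgraph G"
begin
lemma pat_P4: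
  assumes "v1 \<in> verts G" "v2 \<in> verts G" "v3 \<in> verts G" "v4 \<in> verts G"
    "distinct [v1, v2, v3, v4]" "adj G v1 v2" "\<not> adj G v1 v3" "\<not> adj G v1 v4" "adj G v2 v3" "\<not> adj G v2 v4" "adj G v3 v4"
  shows "induced_sub P4 G"
proof -
  have L: "adj G v1 v2" "adj G v2 v1" "\<not> adj G v1 v3" "\<not> adj G v3 v1" "\<not> adj G v1 v4" "\<not> adj G v4 v1" "adj G v2 v3" "adj G v3 v2" "\<not> adj G v2 v4" "\<not> adj G v4 v2" "adj G v3 v4" "adj G v4 v3"
    using assms sgraph_sym[OF sg] by auto
  have I: "\<not> adj G v1 v1" "\<not> adj G v2 v2" "\<not> adj G v3 v3" "\<not> adj G v4 v4" using sg by (auto simp: sgraph_def)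
  show ?thesis unfolding P4_def
    apply (rule ind_list[of "[v1, v2, v3, v4]"])
    using assms(1-5) apply auto[3]
    unfolding s4 by (simp add: L I)
qed

lemma pat_K5_minus_S2:
  assumes "v1 \<in> verts G" "v2 \<in> verts G" "v3 \<in> verts G" "v4 \<in> verts G" "v5 \<in> verts G"
    "distinct [v1, v2, v3, v4, v5]" "\<not> adj G v1 v2" "adj G v1 v3" "adj G v1 v4" "adj G v1 v5" "\<not> adj G v2 v3" "adj G v2 v4" "adj G v2 v5" "adj G v3 v4" "adj G v3 v5" "adj G v4 v5"
  shows "induced_sub K5_minus_S2 G"
proof -
  have L: "\<not> adj G v1 v2" "\<not> adj G v2 v1" "adj G v1 v3" "adj G v3 v1" "adj G v1 v4" "adj G v4 v1" "adj G v1 v5" "adj G v5 v1" "\<not> adj G v2 v3" "\<not> adj G v3 v2" "adj G v2 v4" "adj G v4 v2" "adj G v2 v5" "adj G v5 v2" "adj G v3 v4" "adj G v4 v3" "adj G v3 v5" "adj G v5 v3" "adj G v4 v5" "adj G v5 v4"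
    using assms sgraph_sym[OF sg] by auto
  have I: "\<not> adj G v1 v1" "\<not> adj G v2 v2" "\<not> adj G v3 v3" "\<not> adj G v4 v4" "\<not> adj G v5 v5" using sg by (auto simp: sgraph_def)
  show ?thesis unfolding K5_minus_S2_def
    apply (rule ind_list[of "[v1, v2, v3, v4, v5]"])
    using assms(1-6) apply auto[3]
    unfolding s5 by (simp add: L I)
qed

lemma pat_K6_minus_M2:
  assumes "v1 \<in> verts G" "v2 \<in> verts G" "v3 \<in> verts G" "v4 \<in> verts G" "v5 \<in> verts G" "v6 \<in> verts G"
    "distinct [v1, v2, v3, v4, v5, v6]" "\<not> adj G v1 v2" "adj G v1 v3" "adj G v1 v4" "adj G v1 v5" "adj G v1 v6" "adj G v2 v3" "adj G v2 v4" "adj G v2 v5" "adj G v2 v6" "\<not> adj G v3 v4" "adj G v3 v5" "adj G v3 v6" "adj G v4 v5" "adj G v4 v6" "adj G v5 v6"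
  shows "induced_sub K6_minus_M2 G"
proof -
  have L: "\<not> adj G v1 v2" "\<not> adj G v2 v1" "adj G v1 v3" "adj G v3 v1" "adj G v1 v4" "adj G v4 v1" "adj G v1 v5" "adj G v5 v1" "adj G v1 v6" "adj G v6 v1" "adj G v2 v3" "adj G v3 v2" "adj G v2 v4" "adj G v4 v2" "adj G v2 v5" "adj G v5 v2" "adj G v2 v6" "adj G v6 v2" "\<not> adj G v3 v4" "\<not> adj G v4 v3" "adj G v3 v5" "adj G v5 v3" "adj G v3 v6" "adj G v6 v3" "adj G v4 v5" "adj G v5 v4" "adj G v4 v6" "adj G v6 v4" "adj G v5 v6" "adj G v6 v5"
    using assms sgraph_sym[OF sg] by auto
  have I: "\<not> adj G v1 v1" "\<not> adj G v2 v2" "\<not> adj G v3 v3" "\<not> adj G v4 v4" "\<not> adj G v5 v5" "\<not> adj G v6 v6" using sg by (auto simp: sgraph_def)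
  show ?thesis unfolding K6_minus_M2_def
    apply (rule ind_list[of "[v1, v2, v3, v4, v5, v6]"])
    using assms(1-7) apply auto[3]
    unfolding s6 by (simp add: L I)
qed

lemma pat_F2_4:
  assumes "v1 \<in> verts G" "v2 \<in> verts G" "v3 \<in> verts G" "v4 \<in> verts G" "v5 \<in> verts G"
    "distinct [v1, v2, v3, v4, v5]" "\<not> adj G v1 v2" "\<not> adj G v1 v3" "adj G v1 v4" "\<not> adj G v1 v5" "adj G v2 v3" "adj G v2 v4" "\<not> adj G v2 v5" "adj G v3 v4" "\<not> adj G v3 v5" "adj G v4 v5"
  shows "induced_sub F2_4 G"
proof -
  have L: "\<not> adj G v1 v2" "\<not> adj G v2 v1" "\<not> adj G v1 v3" "\<not> adj G v3 v1" "adj G v1 v4" "adj G v4 v1" "\<not> adj G v1 v5" "\<not> adj G v5 v1" "adj G v2 v3" "adj G v3 v2" "adj G v2 v4" "adj G v4 v2" "\<not> adj G v2 v5" "\<not> adj G v5 v2" "adj G v3 v4" "adj G v4 v3" "\<not> adj G v3 v5" "\<not> adj G v5 v3" "adj G v4 v5" "adj G v5 v4"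
    using assms sgraph_sym[OF sg] by auto
  have I: "\<not> adj G v1 v1" "\<not> adj G v2 v2" "\<not> adj G v3 v3" "\<not> adj G v4 v4" "\<not> adj G v5 v5" using sg by (auto simp: sgraph_def)
  show ?thesis unfolding F2_4_def
    apply (rule ind_list[of "[v1, v2, v3, v4, v5]"])
    using assms(1-6) apply auto[3]
    unfolding s5 by (simp add: L I)
qed

lemma pat_F2_5:
  assumes "v1 \<in> verts G" "v2 \<in> verts G" "v3 \<in> verts G" "v4 \<in> verts G" "v5 \<in> verts G"
    "distinct [v1, v2, v3, v4, v5]" "adj G v1 v2" "\<not> adj G v1 v3" "adj G v1 v4" "\<not> adj G v1 v5" "adj G v2 v3" "adj G v2 v4" "\<not> adj G v2 v5" "adj G v3 v4" "\<not> adj G v3 v5" "adj G v4 v5"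
  shows "induced_sub F2_5 G"
proof -
  have L: "adj G v1 v2" "adj G v2 v1" "\<not> adj G v1 v3" "\<not> adj G v3 v1" "adj G v1 v4" "adj G v4 v1" "\<not> adj G v1 v5" "\<not> adj G v5 v1" "adj G v2 v3" "adj G v3 v2" "adj G v2 v4" "adj G v4 v2" "\<not> adj G v2 v5" "\<not> adj G v5 v2" "adj G v3 v4" "adj G v4 v3" "\<not> adj G v3 v5" "\<not> adj G v5 v3" "adj G v4 v5" "adj G v5 v4"
    using assms sgraph_sym[OF sg] by auto
  have I: "\<not> adj G v1 v1" "\<not> adj G v2 v2" "\<not> adj G v3 v3" "\<not> adj G v4 v4" "\<not> adj G v5 v5" using sg by (auto simp: sgraph_def)
  show ?thesis unfolding F2_5_def
    apply (rule ind_list[of "[v1, v2, v3, v4, v5]"])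
    using assms(1-6) apply auto[3]
    unfolding s5 by (simp add: L I)
qed

end



context
  fixes G :: "'a graph"
  assumes sg: "sgraph G" and ff: "F2_free G" and con: "connected_graph G"
begin

lemma adj_irr[simp]: "\<not> adj G x x" using sg unfolding sgraph_def by blast
lemma adj_in: "adj G x y \<Longrightarrow> x \<in> verts G \<and> y \<in> verts G" using sg unfolding sgraph_def by blast
lemma adj_sym: "adj G x y = adj G y x" using sgraph_sym[OF sg] .

lemma noP4:
  assumes "v1 \<in> verts G" "v2 \<in> verts G" "v3 \<in> verts G" "v4 \<in> verts G"
    "distinct [v1, v2, v3, v4]" "adj G v1 v2" "\<not> adj G v1 v3" "\<not> adj G v1 v4" "adj G v2 v3" "\<not> adj G v2 v4" "adj G v3 v4"
  shows False
  using pat_P4[OF sg assms] ff unfolding F2_free_def F2_def by blast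

lemma noK5S2:
  assumes "v1 \<in> verts G" "v2 \<in> verts G" "v3 \<in> verts G" "v4 \<in> verts G" "v5 \<in> verts G"
    "distinct [v1, v2, v3, v4, v5]" "\<not> adj G v1 v2" "adj G v1 v3" "adj G v1 v4" "adj G v1 v5" "\<not> adj G v2 v3" "adj G v2 v4" "adj G v2 v5" "adj G v3 v4" "adj G v3 v5" "adj G v4 v5"
  shows False
  using pat_K5_minus_S2[OF sg assms] ff unfolding F2_free_def F2_def by blast

lemma noK6M2:
  assumes "v1 \<in> verts G" "v2 \<in> verts G" "v3 \<in> verts G" "v4 \<in> verts G" "v5 \<in> verts G" "v6 \<in> verts G"
    "distinct [v1, v2, v3, v4, v5, v6]" "\<not> adj G v1 v2" "adj G v1 v3" "adj G v1 v4" "adj G v1 v5" "adj G v1 v6" "adj G v2 v3" "adj G v2 v4" "adj G v2 v5" "adj G v2 v6" "\<not> adj G v3 v4" "adj G v3 v5" "adj G v3 v6" "adj G v4 v5" "adj G v4 v6" "adj G v5 v6"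
  shows False
  using pat_K6_minus_M2[OF sg assms] ff unfolding F2_free_def F2_def by blast

lemma noF4:
  assumes "v1 \<in> verts G" "v2 \<in> verts G" "v3 \<in> verts G" "v4 \<in> verts G" "v5 \<in> verts G"
    "distinct [v1, v2, v3, v4, v5]" "\<not> adj G v1 v2" "\<not> adj G v1 v3" "adj G v1 v4" "\<not> adj G v1 v5" "adj G v2 v3" "adj G v2 v4" "\<not> adj G v2 v5" "adj G v3 v4" "\<not> adj G v3 v5" "adj G v4 v5"
  shows False
  using pat_F2_4[OF sg assms] ff unfolding F2_free_def F2_def by blast

lemma noF5:
  assumes "v1 \<in> verts G" "v2 \<in> verts G" "v3 \<in> verts G" "v4 \<in> verts G" "v5 \<in> verts G"
    "distinct [v1, v2, v3, v4, v5]" "adj G v1 v2" "\<not> adj G v1 v3" "adj G v1 v4" "\<not> adj G v1 v5" "adj G v2 v3" "adj G v2 v4" "\<not> adj G v2 v5" "adj G v3 v4" "\<not> adj G v3 v5" "adj G v4 v5"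
  shows False
  using pat_F2_5[OF sg assms] ff unfolding F2_free_def F2_def by blast

lemma reach_short:
  assumes "(adj G)\<^sup>*\<^sup>* x y" "x \<in> verts G"
  shows "x = y \<or> adj G x y \<or> (\<exists>w. adj G x w \<and> adj G w y)"
  using assms(1)
proof (induction rule: rtranclp_induct)
  case base then show ?case by simp
next
  case (step v v')
  from step.IH show ?case
  proof (elim disjE exE conjE)
    assume "x = v" then show ?case using step.hyps by simp
  next
    assume "adj G x v" then show ?case using step.hyps by blast
  next
    fix w assume xw: "adj G x w" and wv: "adj G w v"
    show ?case
    proof (rule ccontr)
      assume "\<not> ?case"
      then have h: "x \<noteq> v'" "\<not> adj G x v'" "\<not> adj G w v'" "\<not> adj G x v" using xw step.hyps(2) by auto
      have "x \<noteq> v" using h(2) step.hyps(2) by auto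
      show False
        by (rule noP4[of x w v v']) (use h xw wv step.hyps(2) adj_in in \<open>auto simp: adj_sym\<close>)
    qed
  qed
qed

lemma CN:
  assumes "x \<in> verts G" "y \<in> verts G" "x \<noteq> y" "\<not> adj G x y"
  shows "\<exists>w. adj G x w \<and> adj G w y"
  using reach_short[of x y] con assms unfolding connected_graph_def by blast


lemma caseB:
  assumes xV: "x \<in> verts G" and yV: "y \<in> verts G" and zV: "z \<in> verts G"
    and xz: "adj G x z" and xy: "\<not> adj G x y" and yz: "\<not> adj G y z" and "x \<noteq> y" "y \<noteq> z"
  shows "\<exists>cl. (\<forall>v\<in>verts G. cl v < (3::nat)) \<and> (\<forall>a\<in>verts G. \<forall>b\<in>verts G. adj G a b \<longleftrightarrow> a \<noteq> b \<and> RT (cl a) (cl b))"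
proof -
  note ne = \<open>x \<noteq> y\<close> \<open>y \<noteq> z\<close>
  obtain w where yw: "adj G y w" and wx: "adj G w x" using CN[of y x] xV yV ne xy adj_sym by blast
  have wV: "w \<in> verts G" using adj_in yw by blast
  have wz: "adj G w z"
  proof (rule ccontr)
    assume "\<not> adj G w z"
    show False by (rule noP4[of z x w y]) (use \<open>\<not> adj G w z\<close> xV yV zV wV xz xy yz yw wx ne in \<open>auto simp: adj_sym\<close>)
  qed
  note base = xV yV zV wV xz xy yz yw wx wz ne
  have A: False if vV: "v \<in> verts G" and h: "v \<noteq> y" "\<not> adj G v y" "v \<noteq> x" "\<not> adj G v x" for v
  proof (cases "adj G v z")
    case True
    have vw: "adj G v w"
    proof (rule ccontr)
      assume "\<not> adj G v w"
      show False by (rule noP4[of y w z v]) (use \<open>\<not> adj G v w\<close> True vV h base in \<open>auto simp: adj_sym\<close>)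
    qed
    show False by (rule noF5[of x z v w y]) (use vw True vV h base in \<open>auto simp: adj_sym\<close>)
  next
    case False
    note vz = False
    show False
    proof (cases "adj G w v")
      case True
      show False by (rule noF4[of y x z w v]) (use vz True vV h base in \<open>auto simp: adj_sym\<close>)
    next
      case False
      note wv = False
      obtain u where vu: "adj G v u" and ux: "adj G u x" using CN[of v x] vV xV h adj_sym by blast
      have uV: "u \<in> verts G" using adj_in vu by blast
      have uz: "adj G u z"
      proof (rule ccontr)
        assume "\<not> adj G u z"
        show False by (rule noP4[of z x u v]) (use \<open>\<not> adj G u z\<close> vu ux uV vz wv vV h base in \<open>auto simp: adj_sym\<close>)
      qed
      show False
      proof (cases "adj G u y")
        case True
        show False by (rule noF4[of y x z u v]) (use True uz vu ux uV vz wv vV h base in \<open>auto simp: adj_sym\<close>)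
      next
        case False
        note uy = False
        show False
        proof (cases "adj G w u")
          case True
          show False by (rule noP4[of v u w y]) (use True uy uz vu ux uV vz wv vV h base in \<open>auto simp: adj_sym\<close>)
        next
          case False
          show False by (rule noP4[of y w x u]) (use False uy uz vu ux uV vz wv vV h base in \<open>auto simp: adj_sym\<close>)
        qed
      qed
    qed
  qed
  have A': "v = x \<or> adj G v x" if "v \<in> verts G" "v \<noteq> y" "\<not> adj G v y" for v
    using A that by blast
  have A'': "v = y \<or> adj G v y" if "v \<in> verts G" "v \<noteq> x" "\<not> adj G v x" for v
    using A that by blast
  have B: "adj G a b" if "a \<in> verts G" "b \<in> verts G" "a \<noteq> y" "\<not> adj G a y" "b \<noteq> y" "\<not> adj G b y" "a \<noteq> b" for a b
  proof (rule ccontr)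
    assume ab: "\<not> adj G a b"
    have ax: "adj G a x" using A'[of a] A'[of b] that ab adj_sym by auto
    have bx: "adj G b x" using A'[of a] A'[of b] that ab adj_sym by auto
    have wa: "adj G w a"
    proof (rule ccontr)
      assume "\<not> adj G w a"
      show False by (rule noP4[of a x w y]) (use \<open>\<not> adj G w a\<close> ax bx ab that base in \<open>auto simp: adj_sym\<close>)
    qed
    have wb: "adj G w b"
    proof (rule ccontr)
      assume "\<not> adj G w b"
      show False by (rule noP4[of b x w y]) (use \<open>\<not> adj G w b\<close> ax bx ab that base in \<open>auto simp: adj_sym\<close>)
    qed
    show False by (rule noF5[of a x b w y]) (use wa wb ax bx ab that base in \<open>auto simp: adj_sym\<close>)
  qed
  have C: "adj G a b" if "a \<in> verts G" "b \<in> verts G" "a \<noteq> x" "\<not> adj G a x" "b \<noteq> x" "\<not> adj G b x" "a \<noteq> b" for a b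
  proof (rule ccontr)
    assume ab: "\<not> adj G a b"
    have ay: "adj G a y" using A''[of a] A''[of b] that ab adj_sym by auto
    have by': "adj G b y" using A''[of a] A''[of b] that ab adj_sym by auto
    have wa: "adj G w a"
    proof (rule ccontr)
      assume "\<not> adj G w a"
      show False by (rule noP4[of a y w x]) (use \<open>\<not> adj G w a\<close> ay by' ab that base in \<open>auto simp: adj_sym\<close>)
    qed
    have wb: "adj G w b"
    proof (rule ccontr)
      assume "\<not> adj G w b"
      show False by (rule noP4[of b y w x]) (use \<open>\<not> adj G w b\<close> ay by' ab that base in \<open>auto simp: adj_sym\<close>)
    qed
    show False by (rule noF5[of a y b w x]) (use wa wb ay by' ab that base in \<open>auto simp: adj_sym\<close>)
  qed
  have Dd: "\<not> adj G a b" if "a \<in> verts G" "b \<in> verts G" "a \<noteq> y" "\<not> adj G a y" "b \<noteq> x" "\<not> adj G b x" for a b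
  proof
    assume ab: "adj G a b"
    have ax: "a = x \<or> adj G a x" using A' that by blast
    have by': "b = y \<or> adj G b y" using A'' that by blast
    have "a \<noteq> x" using ab that adj_sym by auto
    moreover have "b \<noteq> y" using ab that adj_sym by auto
    ultimately show False by (intro noP4[of x a b y]) (use ax by' ab that base in \<open>auto simp: adj_sym\<close>)
  qed
  have E: "\<not> adj G a b" if "a \<in> verts G" "b \<in> verts G" "adj G a x" "adj G a y" "adj G b x" "adj G b y" for a b
  proof
    assume ab: "adj G a b"
    have az: "adj G a z"
    proof (rule ccontr)
      assume "\<not> adj G a z"
      show False by (rule noP4[of z x a y]) (use \<open>\<not> adj G a z\<close> ab that base in \<open>auto simp: adj_sym\<close>)
    qed
    have bz: "adj G b z"
    proof (rule ccontr)
      assume "\<not> adj G b z"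
      show False by (rule noP4[of z x b y]) (use \<open>\<not> adj G b z\<close> ab that base in \<open>auto simp: adj_sym\<close>)
    qed
    show False by (rule noK5S2[of x y z a b]) (use az bz ab that base in \<open>auto simp: adj_sym\<close>)
  qed
  have F1: "adj G a b" if "a \<in> verts G" "b \<in> verts G" "adj G a x" "adj G a y" "b \<noteq> y" "\<not> adj G b y" for a b
  proof (rule ccontr)
    assume ab: "\<not> adj G a b"
    have "b \<noteq> x" using ab that by auto
    then have bx: "adj G b x" using A'[of b] that by blast
    show False by (rule noP4[of b x a y]) (use bx ab that base in \<open>auto simp: adj_sym\<close>)
  qed
  have F2: "adj G a b" if "a \<in> verts G" "b \<in> verts G" "adj G a x" "adj G a y" "b \<noteq> x" "\<not> adj G b x" for a b
  proof (rule ccontr)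
    assume ab: "\<not> adj G a b"
    have "b \<noteq> y" using ab that by auto
    then have bx: "adj G b y" using A''[of b] that by blast
    show False by (rule noP4[of b y a x]) (use bx ab that base in \<open>auto simp: adj_sym\<close>)
  qed
  define cl where "cl v = (if v \<noteq> y \<and> \<not> adj G v y then 1 else if v \<noteq> x \<and> \<not> adj G v x then 2 else (0::nat))" for v
  have K: "adj G v x \<and> adj G v y" if "v \<in> verts G" "cl v = 0" for v
    using that ne xy adj_sym unfolding cl_def by (auto split: if_splits)
  have S: "v \<noteq> y \<and> \<not> adj G v y" if "cl v = 1" for v
    using that unfolding cl_def by (auto split: if_splits)
  have T: "v \<noteq> x \<and> \<not> adj G v x" if "cl v = 2" for v
    using that unfolding cl_def by (auto split: if_splits)
  have R: "RT 0 0 = False" "RT 0 1 = True" "RT 0 2 = True" "RT 1 0 = True" "RT 1 1 = True"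
    "RT 1 2 = False" "RT 2 0 = True" "RT 2 1 = False" "RT 2 2 = True" by (auto simp: RT_def)
  show ?thesis
  proof (intro exI[of _ cl] conjI ballI)
    fix v show "cl v < 3" unfolding cl_def by auto
  next
    fix a b assume ab: "a \<in> verts G" "b \<in> verts G"
    have ca: "cl a = 0 \<or> cl a = 1 \<or> cl a = 2" unfolding cl_def by auto
    have cb: "cl b = 0 \<or> cl b = 1 \<or> cl b = 2" unfolding cl_def by auto
    show "adj G a b \<longleftrightarrow> a \<noteq> b \<and> RT (cl a) (cl b)"
    proof (cases "a = b")
      case True then show ?thesis by simp
    next
      case nab: False
      from ca cb show ?thesis
      proof (elim disjE)
        assume "cl a = 0" "cl b = 0"
        then show ?thesis using E[of a b] ab K[of a] K[of b] R nab by simp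
      next
        assume "cl a = 0" "cl b = 1"
        then show ?thesis using F1[of a b] ab K[of a] S[of b] R nab by simp
      next
        assume "cl a = 0" "cl b = 2"
        then show ?thesis using F2[of a b] ab K[of a] T[of b] R nab by simp
      next
        assume "cl a = 1" "cl b = 0"
        then show ?thesis using F1[of b a] ab K[of b] S[of a] R nab adj_sym[of a b] by simp
      next
        assume "cl a = 1" "cl b = 1"
        then show ?thesis using B[of a b] ab S[of a] S[of b] R nab by simp
      next
        assume "cl a = 1" "cl b = 2"
        then show ?thesis using Dd[of a b] ab S[of a] T[of b] R nab by simp
      next
        assume "cl a = 2" "cl b = 0"
        then show ?thesis using F2[of b a] ab K[of b] T[of a] R nab adj_sym[of a b] by simp
      next
        assume "cl a = 2" "cl b = 1"
        then show ?thesis using Dd[of b a] ab S[of b] T[of a] R nab adj_sym[of a b] by simp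
      next
        assume "cl a = 2" "cl b = 2"
        then show ?thesis using C[of a b] ab T[of a] T[of b] R nab by simp
      qed
    qed
  qed
qed

end



context
  fixes G :: "'a graph"
  assumes sg: "sgraph G" and ff: "F2_free G" and con: "connected_graph G"
begin

lemma caseA:
  assumes tr: "\<And>a b c. a \<in> verts G \<Longrightarrow> b \<in> verts G \<Longrightarrow> c \<in> verts G \<Longrightarrow> \<not> adj G a b \<Longrightarrow> \<not> adj G b c \<Longrightarrow> \<not> adj G a c"
  shows "\<exists>cl. (\<forall>v\<in>verts G. cl v < (3::nat)) \<and> ((\<forall>a\<in>verts G. \<forall>b\<in>verts G. adj G a b \<longleftrightarrow> cl a \<noteq> cl b) \<or> (\<forall>a\<in>verts G. \<forall>b\<in>verts G. adj G a b \<longleftrightarrow> a \<noteq> b \<and> RT (cl a) (cl b)))"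
proof -
  note irr = adj_irr[OF sg ff con]
  have sym: "adj G a b = adj G b a" for a b using adj_sym[OF sg ff con] .
  show ?thesis
  proof (cases "\<exists>a1\<in>verts G. \<exists>a2\<in>verts G. \<exists>a3\<in>verts G. \<exists>a4\<in>verts G. adj G a1 a2 \<and> adj G a1 a3 \<and> adj G a1 a4 \<and> adj G a2 a3 \<and> adj G a2 a4 \<and> adj G a3 a4")
    case True
    then obtain a1 a2 a3 a4 where aV: "a1 \<in> verts G" "a2 \<in> verts G" "a3 \<in> verts G" "a4 \<in> verts G"
      and K: "adj G a1 a2" "adj G a1 a3" "adj G a1 a4" "adj G a2 a3" "adj G a2 a4" "adj G a3 a4" by blast
    show ?thesis
    proof (cases "\<exists>u\<in>verts G. \<exists>u'\<in>verts G. u \<noteq> u' \<and> \<not> adj G u u'")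
      case True
      then obtain u u' where uV: "u \<in> verts G" "u' \<in> verts G" and uu: "u \<noteq> u'" "\<not> adj G u u'" by blast
      define cl where "cl v = (if \<not> adj G v u then 0 else (1::nat))" for v
      have two: "\<exists>s t. s \<in> verts G \<and> t \<in> verts G \<and> s \<noteq> t \<and> adj G s t \<and> adj G s u \<and> adj G t u \<and> adj G s a \<and> adj G t a"
        if "a \<in> verts G" for a
      proof -
        have one: "\<not> (\<not> adj G p w \<and> \<not> adj G q w)" if "p \<in> verts G" "q \<in> verts G" "w \<in> verts G" "adj G p q" for p q w
          using tr[of p w q] that sym by auto
        have "adj G a1 u \<or> adj G a2 u" "adj G a1 u \<or> adj G a3 u" "adj G a1 u \<or> adj G a4 u"
          "adj G a2 u \<or> adj G a3 u" "adj G a2 u \<or> adj G a4 u" "adj G a3 u \<or> adj G a4 u"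
          using one aV K uV by blast+
        moreover have "adj G a1 a \<or> adj G a2 a" "adj G a1 a \<or> adj G a3 a" "adj G a1 a \<or> adj G a4 a"
          "adj G a2 a \<or> adj G a3 a" "adj G a2 a \<or> adj G a4 a" "adj G a3 a \<or> adj G a4 a"
          using one aV K that by blast+
        ultimately show ?thesis using aV K irr by (smt (verit))
      qed
      show ?thesis
      proof (intro exI[of _ cl] conjI disjI2 ballI)
        fix v show "cl v < 3" unfolding cl_def by auto
      next
        fix a b assume ab: "a \<in> verts G" "b \<in> verts G"
        show "adj G a b \<longleftrightarrow> a \<noteq> b \<and> RT (cl a) (cl b)"
        proof (cases "adj G a u")
          case au: True
          show ?thesis
          proof (cases "adj G b u")
            case bu: True
            have "adj G a b" if nab: "a \<noteq> b"
            proof (rule ccontr)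
              assume nadj: "\<not> adj G a b"
              obtain s t where st: "s \<in> verts G" "t \<in> verts G" "s \<noteq> t" "adj G s t" "adj G s u" "adj G t u" "adj G s a" "adj G t a"
                using two[OF ab(1)] by blast
              have u'a: "adj G u' a" using tr[of u u' a] uV ab au uu sym by auto
              have u'b: "adj G u' b" using tr[of u u' b] uV ab bu uu sym by auto
              have u's: "adj G u' s" using tr[of u u' s] uV st uu sym by auto
              have u't: "adj G u' t" using tr[of u u' t] uV st uu sym by auto
              have bs: "adj G b s" using tr[of a b s] ab st nadj sym by auto
              have bt: "adj G b t" using tr[of a b t] ab st nadj sym by auto
              show False
                by (rule noK6M2[OF sg ff con, of u u' a b s t])
                  (use uV uu ab au bu nab nadj st u'a u'b u's u't bs bt irr in \<open>auto simp: sym\<close>)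
            qed
            then show ?thesis using au bu irr by (auto simp: cl_def RT_def)
          next
            case bu: False
            have "adj G a b" using tr[of a b u] ab uV au bu sym by auto
            then show ?thesis using au bu irr by (auto simp: cl_def RT_def)
          qed
        next
          case au: False
          show ?thesis
          proof (cases "adj G b u")
            case bu: True
            have "adj G a b" using tr[of b a u] ab uV au bu sym by auto
            then show ?thesis using au bu irr by (auto simp: cl_def RT_def)
          next
            case bu: False
            have "\<not> adj G a b" using tr[of a u b] ab uV au bu sym by auto
            then show ?thesis using au bu by (auto simp: cl_def RT_def)
          qed
        qed
      qed
    next
      case False
      show ?thesis
        by (rule exI[of _ "\<lambda>_. 1"]) (use False irr in \<open>auto simp: RT_def\<close>)
    qed
  next
    case noK4: False
    show ?thesis
    proof (cases "verts G = {}")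
      case True then show ?thesis by auto
    next
      case False
      then obtain a0 where a0: "a0 \<in> verts G" by blast
      obtain b0 where b0: "b0 \<in> verts G" "(\<forall>v\<in>verts G. \<not> adj G v a0) \<or> adj G b0 a0"
        using a0 by blast
      obtain c0 where c0: "c0 \<in> verts G" "(\<forall>v\<in>verts G. \<not> (adj G v a0 \<and> adj G v b0)) \<or> (adj G c0 a0 \<and> adj G c0 b0)"
        using a0 by blast
      define cl where "cl v = (if \<not> adj G v a0 then 0 else if \<not> adj G v b0 then 1 else (2::nat))" for v
      have eq: "cl a = cl b \<longleftrightarrow> \<not> adj G a b" if ab: "a \<in> verts G" "b \<in> verts G" for a b
      proof (cases "adj G a a0 \<and> adj G a b0 \<and> adj G b a0 \<and> adj G b b0")
        case True
        then have c0': "adj G c0 a0 \<and> adj G c0 b0" "adj G b0 a0" using c0 b0 ab by auto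
        have "\<not> adj G a c0"
        proof
          assume "adj G a c0"
          then show False using noK4 True c0' a0 b0 c0 ab sym by blast
        qed
        moreover have "\<not> adj G b c0"
        proof
          assume "adj G b c0"
          then show False using noK4 True c0' a0 b0 c0 ab sym by blast
        qed
        ultimately have "\<not> adj G a b" using tr[of a c0 b] ab c0 sym by auto
        then show ?thesis using True by (simp add: cl_def)
      next
        case False
        have t1: "\<not> adj G a b" if "\<not> adj G a w" "\<not> adj G b w" "w \<in> verts G" for w
          using tr[of a w b] that ab sym by auto
        have t2: "adj G a b" if "\<not> adj G a w" "adj G b w" "w \<in> verts G" for w
          using tr[of b a w] that ab sym by auto
        have t3: "adj G a b" if "adj G a w" "\<not> adj G b w" "w \<in> verts G" for w
          using tr[of a b w] that ab sym by auto
        show ?thesis using False t1[of a0] t1[of b0] t2[of a0] t2[of b0] t3[of a0] t3[of b0] a0 b0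
          by (auto simp: cl_def)
      qed
      show ?thesis
        by (rule exI[of _ cl], intro conjI disjI1 ballI) (use eq in \<open>auto simp: cl_def\<close>)
    qed
  qed
qed

end



lemma embed:
  fixes V :: "'a set" and cl :: "'a \<Rightarrow> nat"
  assumes fin: "finite V" and c3: "\<forall>v\<in>V. cl v < 3"
  defines "C \<equiv> \<lambda>i. {v\<in>V. cl v = i}"
  shows "\<exists>f. inj_on f V \<and> (\<forall>v\<in>V. fst (f v) = cl v) \<and>
     f ` V \<subseteq> {0}\<times>{..<card (C 0)} \<union> {1}\<times>{..<card (C 1)} \<union> {2}\<times>{..<card (C 2)}"
proof -
  have "\<forall>i. \<exists>h. bij_betw h (C i) {0..<card (C i)}"
  proof
    fix i show "\<exists>h. bij_betw h (C i) {0..<card (C i)}"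
      by (rule ex_bij_betw_finite_nat) (use fin in \<open>simp add: C_def\<close>)
  qed
  then obtain H where H: "\<And>i. bij_betw (H i) (C i) {0..<card (C i)}" by metis
  define f where "f v = (cl v, H (cl v) v)" for v
  have inj: "inj_on f V"
  proof (rule inj_onI)
    fix a b assume ab: "a \<in> V" "b \<in> V" "f a = f b"
    then have "cl a = cl b" "H (cl a) a = H (cl a) b" unfolding f_def by auto
    moreover have "a \<in> C (cl a)" "b \<in> C (cl a)" using ab \<open>cl a = cl b\<close> unfolding C_def by auto
    ultimately show "a = b" using H[of "cl a"] unfolding bij_betw_def inj_on_def by blast
  qed
  have img: "f ` V \<subseteq> {0}\<times>{..<card (C 0)} \<union> {1}\<times>{..<card (C 1)} \<union> {2}\<times>{..<card (C 2)}"
  proof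
    fix p assume "p \<in> f ` V"
    then obtain v where v: "v \<in> V" "p = f v" by blast
    have "v \<in> C (cl v)" using v unfolding C_def by auto
    then have "H (cl v) v < card (C (cl v))" using H[of "cl v"] unfolding bij_betw_def by auto
    moreover have "cl v = 0 \<or> cl v = 1 \<or> cl v = 2" using c3 v by auto
    ultimately show "p \<in> {0}\<times>{..<card (C 0)} \<union> {1}\<times>{..<card (C 1)} \<union> {2}\<times>{..<card (C 2)}"
      using v unfolding f_def by auto
  qed
  show ?thesis using inj img by (intro exI[of _ f]) (auto simp: f_def)
qed

theorem theorem4p3:
  fixes G :: "'a graph"
  assumes "sgraph G" and "connected_graph G"
  shows "F2_free G \<longleftrightarrow>
    (\<exists>m n p. induced_sub G (K3part m n p) \<or> induced_sub G (TKK n m p))"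
proof
  assume ff: "F2_free G"
  note sg = assms(1) and con = assms(2)
  have "\<exists>cl. (\<forall>v\<in>verts G. cl v < (3::nat)) \<and> ((\<forall>a\<in>verts G. \<forall>b\<in>verts G. adj G a b \<longleftrightarrow> cl a \<noteq> cl b) \<or> (\<forall>a\<in>verts G. \<forall>b\<in>verts G. adj G a b \<longleftrightarrow> a \<noteq> b \<and> RT (cl a) (cl b)))"
  proof (cases "\<forall>a\<in>verts G. \<forall>b\<in>verts G. \<forall>c\<in>verts G. \<not> adj G a b \<longrightarrow> \<not> adj G b c \<longrightarrow> \<not> adj G a c")
    case True
    then show ?thesis using caseA[OF sg ff con] by blast
  next
    case False
    then obtain x y z where xyz: "x \<in> verts G" "y \<in> verts G" "z \<in> verts G" "\<not> adj G x y" "\<not> adj G y z" "adj G x z"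
      by blast
    then have "x \<noteq> y" "y \<noteq> z" by auto
    then show ?thesis using caseB[OF sg ff con xyz(1-3) xyz(6) xyz(4) xyz(5)] by blast
  qed
  then obtain cl :: "'a \<Rightarrow> nat" where c3: "\<forall>v\<in>verts G. cl v < 3"
    and adjc: "(\<forall>a\<in>verts G. \<forall>b\<in>verts G. adj G a b \<longleftrightarrow> cl a \<noteq> cl b) \<or> (\<forall>a\<in>verts G. \<forall>b\<in>verts G. adj G a b \<longleftrightarrow> a \<noteq> b \<and> RT (cl a) (cl b))"
    by blast
  have fin: "finite (verts G)" using sg unfolding sgraph_def by blast
  define C where "C \<equiv> \<lambda>i. {v\<in>verts G. cl v = i}"
  obtain f where f: "inj_on f (verts G)" "\<forall>v\<in>verts G. fst (f v) = cl v"
    "f ` verts G \<subseteq> {0}\<times>{..<card (C 0)} \<union> {1}\<times>{..<card (C 1)} \<union> {2}\<times>{..<card (C 2)}"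
    using embed[OF fin c3] unfolding C_def by blast
  from adjc show "\<exists>m n p. induced_sub G (K3part m n p) \<or> induced_sub G (TKK n m p)"
  proof
    assume A: "\<forall>a\<in>verts G. \<forall>b\<in>verts G. adj G a b \<longleftrightarrow> cl a \<noteq> cl b"
    have "induced_sub G (K3part (card (C 0)) (card (C 1)) (card (C 2)))"
      unfolding induced_sub_def
      by (rule exI[of _ f]) (use f A in \<open>auto simp: K3part_def verts_def adj_def\<close>)
    then show ?thesis by blast
  next
    assume A: "\<forall>a\<in>verts G. \<forall>b\<in>verts G. adj G a b \<longleftrightarrow> a \<noteq> b \<and> RT (cl a) (cl b)"
    have "induced_sub G (TKK (card (C 0)) (card (C 1)) (card (C 2)))"
      unfolding induced_sub_def
    proof (rule exI[of _ f], intro conjI ballI)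
      show "inj_on f (verts G)" by (rule f(1))
      show "f ` verts G \<subseteq> verts (TKK (card (C 0)) (card (C 1)) (card (C 2)))"
        using f(3) by (simp add: TKK_def verts_def)
      fix a b assume ab: "a \<in> verts G" "b \<in> verts G"
      have "f a = f b \<longleftrightarrow> a = b" using f(1) ab by (auto dest: inj_onD)
      then show "adj (TKK (card (C 0)) (card (C 1)) (card (C 2))) (f a) (f b) = adj G a b"
        using A ab f(2) by (simp add: TKK_adj)
    qed
    then show ?thesis by blast
  qed
next
  assume "\<exists>m n p. induced_sub G (K3part m n p) \<or> induced_sub G (TKK n m p)"
  then obtain m n p where h: "induced_sub G (K3part m n p) \<or> induced_sub G (TKK n m p)" by blast
  show "F2_free G" unfolding F2_free_def
  proof
    fix H assume HF: "H \<in> F2"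
    show "\<not> induced_sub H G"
    proof
      assume "induced_sub H G"
      then show False using h induced_sub_trans F2_hosts[OF HF, of m n p] by blast
    qed
  qed
qed


end
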